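(* Let $n\ge 1$ and let $u:([0,1]^n,d_n)\to([0,1],d)$ be uniformly continuous, where $d$ is the standard metric on $[0,1]$ and $d_n$ the max-metric on $[0,1]^n$. The following are equivalent: (1) For every complete metric space $(Y,d)$ of diameter at most 1 and all uniformly continuous $\phi_i,\phi_i':Y\to[0,1]$ ($i=1,\dots,n$) with $\phi_i\simeq\phi_i'$ for each $i$, one has $u(\phi_1,\dots,\phi_n)\simeq u(\phi_1',\dots,\phi_n')$. (2) For all $p,q\in[0,1]^n$ such that $p_i=0\iff q_i=0$ for every $i$, either $u(p)=u(q)=0$, or $u(p)>0$ and $u(q)>0$. (3) There is $A\subseteq\mathcal P(\{1,\dots,n\})$ such that $u^{-1}(0)=\bigcup_{K\in A}\{z\in[0,1]^n : z_i=0\iff i\in K\}$.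
   Context: For functions $\alpha,\beta:Y\to[0,1]$ write $\alpha\sqsubseteq\beta$ if for every $\varepsilon>0$ there exists $\delta>0$ such that for all $y$, $\alpha(y)\le\delta$ implies $\beta(y)\le\varepsilon$; and $\alpha\simeq\beta$ if $\alpha\sqsubseteq\beta$ and $\beta\sqsubseteq\alpha$. For functions $\phi_1,\dots,\phi_n:Y\to[0,1]$, $u(\phi_1,\dots,\phi_n)$ denotes the function $y\mapsto u(\phi_1(y),\dots,\phi_n(y))$. *)

theory Defs
  imports "HOL-Analysis.Analysis"
begin

text \<open>The cube [0,1]^n, with coordinates indexed by a finite type 'i (so n = CARD('i) >= 1).\<close>
definition unit_cube :: "('i::finite \<Rightarrow> real) set" where
  "unit_cube = {z. \<forall>i. 0 \<le> z i \<and> z i \<le> 1}"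

definition ucont_cube :: "(('i::finite \<Rightarrow> real) \<Rightarrow> real) \<Rightarrow> bool" where
  "ucont_cube u \<longleftrightarrow> (\<forall>z\<in>unit_cube. 0 \<le> u z \<and> u z \<le> 1) \<and>
     (\<forall>e>0. \<exists>\<delta>>0. \<forall>p\<in>unit_cube. \<forall>q\<in>unit_cube.
        (Max (range (\<lambda>i. \<bar>p i - q i\<bar>)) < \<delta>) \<longrightarrow> \<bar>u p - u q\<bar> < e)"

definition ucont_unit :: "'y set \<Rightarrow> ('y \<Rightarrow> 'y \<Rightarrow> real) \<Rightarrow> ('y \<Rightarrow> real) \<Rightarrow> bool" where
  "ucont_unit Y d \<phi> \<longleftrightarrow> (\<forall>y\<in>Y. 0 \<le> \<phi> y \<and> \<phi> y \<le> 1) \<and>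
     (\<forall>e>0. \<exists>\<delta>>0. \<forall>x\<in>Y. \<forall>y\<in>Y. d x y < \<delta> \<longrightarrow> \<bar>\<phi> x - \<phi> y\<bar> < e)"

definition sqle :: "'y set \<Rightarrow> ('y \<Rightarrow> real) \<Rightarrow> ('y \<Rightarrow> real) \<Rightarrow> bool" where
  "sqle Y \<alpha> \<beta> \<longleftrightarrow> (\<forall>\<epsilon>>0. \<exists>\<delta>>0. \<forall>y\<in>Y. \<alpha> y \<le> \<delta> \<longrightarrow> \<beta> y \<le> \<epsilon>)"

definition sqeq :: "'y set \<Rightarrow> ('y \<Rightarrow> real) \<Rightarrow> ('y \<Rightarrow> real) \<Rightarrow> bool" where
  "sqeq Y \<alpha> \<beta> \<longleftrightarrow> sqle Y \<alpha> \<beta> \<and> sqle Y \<beta> \<alpha>"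

end

theory Submission
  imports Defs
begin

lemma single_metric: "Metric_space {a} (\<lambda>x y. 0::real)"
  by unfold_locales auto

lemma single_mcomplete: "Metric_space.mcomplete {a} (\<lambda>x y. 0::real)"
proof -
  interpret Metric_space "{a}" "\<lambda>x y. 0::real"
    by (rule single_metric)
  show ?thesis
    unfolding mcomplete_def MCauchy_def image_subset_iff by (metis UNIV_I limit_metric_sequentially)
qed

lemma key:
  fixes u :: "('i::finite \<Rightarrow> real) \<Rightarrow> real"
  assumes uc: "ucont_cube u"
    and two: "\<forall>p\<in>unit_cube. \<forall>q\<in>unit_cube. (\<forall>i. p i = 0 \<longleftrightarrow> q i = 0) \<longrightarrow>
             (u p = 0 \<and> u q = 0) \<or> (u p > 0 \<and> u q > 0)"
    and ab: "\<And>k. a k \<in> unit_cube" "\<And>k. b k \<in> unit_cube"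
    and ua: "\<And>k. u (a k) \<le> 1 / (real k + 1)"
    and ub: "\<And>k. u (b k) > e" and e: "e > 0"
    and c1: "\<And>i \<eta>. \<eta> > 0 \<Longrightarrow> \<exists>\<delta>>0. \<forall>k. a k i \<le> \<delta> \<longrightarrow> b k i \<le> \<eta>"
    and c2: "\<And>i \<eta>. \<eta> > 0 \<Longrightarrow> \<exists>\<delta>>0. \<forall>k. b k i \<le> \<delta> \<longrightarrow> a k i \<le> \<eta>"
  shows False
proof -
  define S where "S = cbox (0::real^'i) 1 \<times> cbox (0::real^'i) 1"
  have cS: "compact S" unfolding S_def by (intro compact_Times compact_cbox)
  define Z where "Z = (\<lambda>k. ((\<chi> i. a k i) :: real^'i, (\<chi> i. b k i) :: real^'i))"
  have ZS: "\<forall>k. Z k \<in> S" using ab unfolding Z_def S_def unit_cube_def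
    by (auto simp: mem_box_cart)
  obtain l r where lS: "l \<in> S" and r: "strict_mono r" and lim: "(Z \<circ> r) \<longlonglongrightarrow> l"
    using cS ZS unfolding compact_def by meson
  define p where "p = (\<lambda>i. fst l $ i)"
  define q where "q = (\<lambda>i. snd l $ i)"
  have pc: "p \<in> unit_cube" "q \<in> unit_cube" using lS unfolding S_def p_def q_def unit_cube_def
    by (auto simp: mem_box_cart)
  have la: "(\<lambda>k. a (r k) i) \<longlonglongrightarrow> p i" for i
  proof -
    have "(\<lambda>k. fst (Z (r k)) $ i) \<longlonglongrightarrow> fst l $ i"
      using lim by (intro tendsto_vec_nth tendsto_fst) (simp add: o_def)
    then show ?thesis by (simp add: Z_def p_def)
  qed
  have lb: "(\<lambda>k. b (r k) i) \<longlonglongrightarrow> q i" for i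
  proof -
    have "(\<lambda>k. snd (Z (r k)) $ i) \<longlonglongrightarrow> snd l $ i"
      using lim by (intro tendsto_vec_nth tendsto_snd) (simp add: o_def)
    then show ?thesis by (simp add: Z_def q_def)
  qed
  have ucont: "(\<lambda>k. u (x k)) \<longlonglongrightarrow> u z"
    if xc: "\<And>k. x k \<in> unit_cube" and zc: "z \<in> unit_cube" and xl: "\<And>i. (\<lambda>k. x k i) \<longlonglongrightarrow> z i" for x z
  proof (rule LIMSEQ_I)
    fix e' :: real assume "e' > 0"
    then obtain d where d: "d > 0" and dd: "\<forall>p\<in>unit_cube. \<forall>q\<in>unit_cube.
        (Max (range (\<lambda>i. \<bar>p i - q i\<bar>)) < d) \<longrightarrow> \<bar>u p - u q\<bar> < e'"
      using uc unfolding ucont_cube_def by blast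
    have "\<forall>\<^sub>F k in sequentially. \<forall>i. \<bar>x k i - z i\<bar> < d"
    proof (rule eventually_all_finite)
      fix i
      show "\<forall>\<^sub>F k in sequentially. \<bar>x k i - z i\<bar> < d"
        using tendstoD[OF xl[of i] d] by (simp add: dist_real_def)
    qed
    then obtain N where N: "\<And>k. k \<ge> N \<Longrightarrow> \<forall>i. \<bar>x k i - z i\<bar> < d"
      unfolding eventually_sequentially by blast
    show "\<exists>N. \<forall>n\<ge>N. norm (u (x n) - u z) < e'"
    proof (intro exI allI impI)
      fix n assume "n \<ge> N"
      then have "\<forall>i. \<bar>x n i - z i\<bar> < d" using N by blast
      then have "Max (range (\<lambda>i. \<bar>x n i - z i\<bar>)) < d" by auto
      then show "norm (u (x n) - u z) < e'" using dd xc zc by auto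
    qed
  qed
  have up0: "u p = 0"
  proof -
    have t1: "(\<lambda>k. u (a (r k))) \<longlonglongrightarrow> u p" by (rule ucont) (use ab pc la in auto)
    have t2: "(\<lambda>k. 1 / (real (r k) + 1)) \<longlonglongrightarrow> 0"
    proof -
      have "filterlim r sequentially sequentially" using r by (rule filterlim_subseq)
      moreover have "(\<lambda>k::nat. 1 / (real k + 1)) \<longlonglongrightarrow> 0" using LIMSEQ_inverse_real_of_nat by (simp add: inverse_eq_divide add.commute)
      ultimately show ?thesis by (rule filterlim_compose[of "\<lambda>k. 1 / (real k + 1)", rotated])
    qed
    have "u p \<le> 0" by (rule LIMSEQ_le[OF t1 t2]) (use ua in auto)
    moreover have "u p \<ge> 0" using uc pc unfolding ucont_cube_def by auto
    ultimately show ?thesis by simp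
  qed
  have uqe: "u q \<ge> e"
  proof -
    have t1: "(\<lambda>k. u (b (r k))) \<longlonglongrightarrow> u q" by (rule ucont) (use ab pc lb in auto)
    show ?thesis by (rule LIMSEQ_le_const[OF t1]) (use ub less_imp_le in auto)
  qed
  have pat: "p i = 0 \<longleftrightarrow> q i = 0" for i
  proof
    assume p0: "p i = 0"
    have "q i \<le> \<eta>" if eta: "\<eta> > 0" for \<eta>
    proof -
      obtain \<delta> where "\<delta> > 0" and hd: "\<forall>k. a k i \<le> \<delta> \<longrightarrow> b k i \<le> \<eta>" using c1[OF eta] by blast
      have "\<forall>\<^sub>F k in sequentially. \<bar>a (r k) i - p i\<bar> < \<delta>"
        using tendstoD[OF la[of i] \<open>\<delta>>0\<close>] by (simp add: dist_real_def)
      then have "\<forall>\<^sub>F k in sequentially. b (r k) i \<le> \<eta>"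
        by eventually_elim (use p0 hd in auto)
      then show ?thesis by (rule tendsto_upperbound[OF lb]) simp
    qed
    then have "q i \<le> 0" by (meson dense not_le)
    moreover have "q i \<ge> 0" using pc unfolding unit_cube_def by auto
    ultimately show "q i = 0" by simp
  next
    assume q0: "q i = 0"
    have "p i \<le> \<eta>" if eta: "\<eta> > 0" for \<eta>
    proof -
      obtain \<delta> where "\<delta> > 0" and hd: "\<forall>k. b k i \<le> \<delta> \<longrightarrow> a k i \<le> \<eta>" using c2[OF eta] by blast
      have "\<forall>\<^sub>F k in sequentially. \<bar>b (r k) i - q i\<bar> < \<delta>"
        using tendstoD[OF lb[of i] \<open>\<delta>>0\<close>] by (simp add: dist_real_def)
      then have "\<forall>\<^sub>F k in sequentially. a (r k) i \<le> \<eta>"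
        by eventually_elim (use q0 hd in auto)
      then show ?thesis by (rule tendsto_upperbound[OF la]) simp
    qed
    then have "p i \<le> 0" by (meson dense not_le)
    moreover have "p i \<ge> 0" using pc unfolding unit_cube_def by auto
    ultimately show "p i = 0" by simp
  qed
  show False using two pc pat up0 uqe e by fastforce
qed

lemma sqle_main:
  fixes u :: "('i::finite \<Rightarrow> real) \<Rightarrow> real"
  assumes uc: "ucont_cube u"
    and two: "\<forall>p\<in>unit_cube. \<forall>q\<in>unit_cube. (\<forall>i. p i = 0 \<longleftrightarrow> q i = 0) \<longrightarrow>
             (u p = 0 \<and> u q = 0) \<or> (u p > 0 \<and> u q > 0)"
    and h: "\<forall>i. ucont_unit Y d (\<phi> i) \<and> ucont_unit Y d (\<phi>' i) \<and> sqeq Y (\<phi> i) (\<phi>' i)"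
  shows "sqle Y (\<lambda>y. u (\<lambda>i. \<phi> i y)) (\<lambda>y. u (\<lambda>i. \<phi>' i y))"
proof (rule ccontr)
  assume "\<not> ?thesis"
  then obtain e where e: "e > 0" and bad: "\<forall>\<delta>>0. \<exists>y\<in>Y. u (\<lambda>i. \<phi> i y) \<le> \<delta> \<and> \<not> u (\<lambda>i. \<phi>' i y) \<le> e"
    unfolding sqle_def by blast
  have "\<forall>k::nat. \<exists>y\<in>Y. u (\<lambda>i. \<phi> i y) \<le> 1 / (real k + 1) \<and> \<not> u (\<lambda>i. \<phi>' i y) \<le> e"
    using bad by simp
  then obtain y where y: "\<And>k. y k \<in> Y" "\<And>k. u (\<lambda>i. \<phi> i (y k)) \<le> 1 / (real k + 1)"
     "\<And>k. \<not> u (\<lambda>i. \<phi>' i (y k)) \<le> e"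
    by metis
  show False
  proof (rule key[OF uc two, of "\<lambda>k i. \<phi> i (y k)" "\<lambda>k i. \<phi>' i (y k)" e])
    show "(\<lambda>i. \<phi> i (y k)) \<in> unit_cube" for k using h y(1) unfolding ucont_unit_def unit_cube_def by auto
    show "(\<lambda>i. \<phi>' i (y k)) \<in> unit_cube" for k using h y(1) unfolding ucont_unit_def unit_cube_def by auto
    show "u (\<lambda>i. \<phi> i (y k)) \<le> 1 / (real k + 1)" for k using y by auto
    show "e < u (\<lambda>i. \<phi>' i (y k))" for k using y(3)[of k] by auto
    show "e > 0" by fact
    show "\<exists>\<delta>>0. \<forall>k. \<phi> i (y k) \<le> \<delta> \<longrightarrow> \<phi>' i (y k) \<le> \<eta>" if "\<eta> > 0" for i \<eta>
      using h that y(1) unfolding sqeq_def sqle_def by meson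
    show "\<exists>\<delta>>0. \<forall>k. \<phi>' i (y k) \<le> \<delta> \<longrightarrow> \<phi> i (y k) \<le> \<eta>" if "\<eta> > 0" for i \<eta>
      using h that y(1) unfolding sqeq_def sqle_def by meson
  qed
qed

theorem mainTheorem7:
  fixes u :: "('i::finite \<Rightarrow> real) \<Rightarrow> real"
  assumes "ucont_cube u"
  shows "((\<forall>(Y::'y set) d (\<phi>::'i \<Rightarrow> 'y \<Rightarrow> real) \<phi>'.
             Metric_space Y d \<and> Metric_space.mcomplete Y d \<and> (\<forall>x\<in>Y. \<forall>y\<in>Y. d x y \<le> 1) \<and>
             (\<forall>i. ucont_unit Y d (\<phi> i) \<and> ucont_unit Y d (\<phi>' i) \<and> sqeq Y (\<phi> i) (\<phi>' i))
             \<longrightarrow> sqeq Y (\<lambda>y. u (\<lambda>i. \<phi> i y)) (\<lambda>y. u (\<lambda>i. \<phi>' i y)))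
          \<longleftrightarrow>
          (\<forall>p\<in>unit_cube. \<forall>q\<in>unit_cube. (\<forall>i. p i = 0 \<longleftrightarrow> q i = 0) \<longrightarrow>
             (u p = 0 \<and> u q = 0) \<or> (u p > 0 \<and> u q > 0)))
       \<and>
         ((\<forall>p\<in>unit_cube. \<forall>q\<in>unit_cube. (\<forall>i. p i = 0 \<longleftrightarrow> q i = 0) \<longrightarrow>
             (u p = 0 \<and> u q = 0) \<or> (u p > 0 \<and> u q > 0))
          \<longleftrightarrow>
          (\<exists>A :: 'i set set. {z\<in>unit_cube. u z = 0} =
             (\<Union>K\<in>A. {z\<in>unit_cube. \<forall>i. z i = 0 \<longleftrightarrow> i \<in> K})))"
  (is "(?P1 \<longleftrightarrow> ?P2) \<and> (?P2 \<longleftrightarrow> ?P3)")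
proof -
  have nn: "\<And>z. z \<in> unit_cube \<Longrightarrow> 0 \<le> u z" using assms unfolding ucont_cube_def by auto
  have "?P1 \<longleftrightarrow> ?P2"
  proof
    assume P1: ?P1
    show ?P2
    proof (intro ballI impI)
      fix p q :: "'i \<Rightarrow> real" assume pc: "p \<in> unit_cube" and qc: "q \<in> unit_cube"
        and pat: "\<forall>i. p i = 0 \<longleftrightarrow> q i = 0"
      obtain y0 :: 'y where True by blast
      define Y :: "'y set" where "Y = {y0}"
      have cst: "sqle Y (\<lambda>_. a) (\<lambda>_. b)" if "a \<ge> 0" "a = 0 \<longrightarrow> b = 0" for a b :: real
        unfolding sqle_def
      proof (intro allI impI)
        fix \<epsilon> :: real assume "\<epsilon> > 0"
        show "\<exists>\<delta>>0. \<forall>y\<in>Y. a \<le> \<delta> \<longrightarrow> b \<le> \<epsilon>"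
        proof (cases "a = 0")
          case True then show ?thesis using that \<open>\<epsilon>>0\<close> by (intro exI[of _ 1]) auto
        next
          case False then show ?thesis using that by (intro exI[of _ "a/2"]) auto
        qed
      qed
      have uu: "\<forall>i. ucont_unit Y (\<lambda>x y. 0) (\<lambda>_. z i)" if "z \<in> unit_cube" for z :: "'i \<Rightarrow> real"
        using that unfolding ucont_unit_def unit_cube_def by auto
      have sq: "\<forall>i. sqeq Y (\<lambda>_. p i) (\<lambda>_. q i)"
        using cst pat pc qc unfolding sqeq_def unit_cube_def by auto
      have "sqeq Y (\<lambda>y. u (\<lambda>i. p i)) (\<lambda>y. u (\<lambda>i. q i))"
      proof (rule P1[rule_format, of Y "\<lambda>x y. 0" "\<lambda>i _. p i" "\<lambda>i _. q i"], intro conjI allI)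
        show "Metric_space Y (\<lambda>x y. 0)" unfolding Y_def by (rule single_metric)
        show "Metric_space.mcomplete Y (\<lambda>x y. 0)" unfolding Y_def by (rule single_mcomplete)
      qed (use uu[OF pc] uu[OF qc] sq in auto)
      then have s1: "sqle Y (\<lambda>_. u p) (\<lambda>_. u q)" and s2: "sqle Y (\<lambda>_. u q) (\<lambda>_. u p)"
        unfolding sqeq_def by auto
      have imp: "a = 0 \<Longrightarrow> b \<le> 0" if "sqle Y (\<lambda>_. a) (\<lambda>_. b)" for a b :: real
      proof -
        assume a0: "a = 0"
        have "b \<le> \<epsilon>" if "\<epsilon> > 0" for \<epsilon>
          using \<open>sqle Y (\<lambda>_. a) (\<lambda>_. b)\<close> that a0 unfolding sqle_def Y_def by fastforce
        then show "b \<le> 0" by (meson dense not_le)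
      qed
      show "u p = 0 \<and> u q = 0 \<or> 0 < u p \<and> 0 < u q"
        using imp[OF s1] imp[OF s2] nn[OF pc] nn[OF qc] by force
    qed
  next
    assume P2: ?P2
    show ?P1
    proof (intro allI impI)
      fix Y :: "'y set" and d and \<phi> \<phi>' :: "'i \<Rightarrow> 'y \<Rightarrow> real"
      assume H: "Metric_space Y d \<and> Metric_space.mcomplete Y d \<and> (\<forall>x\<in>Y. \<forall>y\<in>Y. d x y \<le> 1) \<and>
             (\<forall>i. ucont_unit Y d (\<phi> i) \<and> ucont_unit Y d (\<phi>' i) \<and> sqeq Y (\<phi> i) (\<phi>' i))"
      then have h1: "\<forall>i. ucont_unit Y d (\<phi> i) \<and> ucont_unit Y d (\<phi>' i) \<and> sqeq Y (\<phi> i) (\<phi>' i)" by blast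
      then have h2: "\<forall>i. ucont_unit Y d (\<phi>' i) \<and> ucont_unit Y d (\<phi> i) \<and> sqeq Y (\<phi>' i) (\<phi> i)"
        unfolding sqeq_def by blast
      show "sqeq Y (\<lambda>y. u (\<lambda>i. \<phi> i y)) (\<lambda>y. u (\<lambda>i. \<phi>' i y))"
        unfolding sqeq_def using sqle_main[OF assms P2 h1] sqle_main[OF assms P2 h2] by blast
    qed
  qed
  moreover have "?P2 \<longleftrightarrow> ?P3"
  proof
    assume P2: ?P2
    show ?P3
    proof (intro exI[of _ "{K. \<exists>z\<in>unit_cube. u z = 0 \<and> K = {i. z i = 0}}"] set_eqI iffI)
      fix z assume "z \<in> {z \<in> unit_cube. u z = 0}"
      then show "z \<in> (\<Union>K\<in>{K. \<exists>z\<in>unit_cube. u z = 0 \<and> K = {i. z i = 0}}. {z \<in> unit_cube. \<forall>i. (z i = 0) = (i \<in> K)})"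
        by auto
    next
      fix z assume "z \<in> (\<Union>K\<in>{K. \<exists>z\<in>unit_cube. u z = 0 \<and> K = {i. z i = 0}}. {z \<in> unit_cube. \<forall>i. (z i = 0) = (i \<in> K)})"
      then obtain w where "w \<in> unit_cube" "u w = 0" "z \<in> unit_cube" "\<forall>i. z i = 0 \<longleftrightarrow> w i = 0" by auto
      then show "z \<in> {z \<in> unit_cube. u z = 0}" using P2 by force
    qed
  next
    assume ?P3
    then obtain A :: "'i set set" where A: "{z\<in>unit_cube. u z = 0} =
             (\<Union>K\<in>A. {z\<in>unit_cube. \<forall>i. z i = 0 \<longleftrightarrow> i \<in> K})" by blast
    have zz: "u q = 0" if "p \<in> unit_cube" "q \<in> unit_cube" "\<forall>i. p i = 0 \<longleftrightarrow> q i = 0" "u p = 0" for p q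
    proof -
      have "p \<in> {z\<in>unit_cube. u z = 0}" using that by auto
      then obtain K where "K \<in> A" "\<forall>i. p i = 0 \<longleftrightarrow> i \<in> K" using A by auto
      then have "q \<in> (\<Union>K\<in>A. {z\<in>unit_cube. \<forall>i. z i = 0 \<longleftrightarrow> i \<in> K})" using that by auto
      then show ?thesis using A by blast
    qed
    show ?P2
    proof (intro ballI impI)
      fix p q :: "'i \<Rightarrow> real" assume pc: "p \<in> unit_cube" and qc: "q \<in> unit_cube"
        and pat: "\<forall>i. p i = 0 \<longleftrightarrow> q i = 0"
      have pat': "\<forall>i. q i = 0 \<longleftrightarrow> p i = 0" using pat by auto
      show "u p = 0 \<and> u q = 0 \<or> 0 < u p \<and> 0 < u q"
        using zz[OF pc qc pat] zz[OF qc pc pat'] nn[OF pc] nn[OF qc] by force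
    qed
  qed
  ultimately show ?thesis by blast
qed

end
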